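(* Let $G=A_n$ be the alternating group with $n\ge 5$. Then $\kappa(G)=2$.
   Context: The commutator is $[x,y]=xyx^{-1}y^{-1}$. For a finite group $G$ with solvable radical $R(G)$ and $g\in G\setminus R(G)$, $\kappa(g)$ is the smallest $n$ such that there exist $x_1,\dots,x_n\in G$ with $\langle [g,x_1],\dots,[g,x_n]\rangle$ not solvable, and $\kappa(G)=\max_{g\in G\setminus R(G)}\kappa(g)$ (the radical degree of $G$). *)

theory Defs
  imports "HOL-Algebra.Solvable_Groups" "HOL-Algebra.Sym_Groups"
begin

definition commutator :: "('a, 'b) monoid_scheme \<Rightarrow> 'a \<Rightarrow> 'a \<Rightarrow> 'a" where
  "commutator G x y = x \<otimes>\<^bsub>G\<^esub> y \<otimes>\<^bsub>G\<^esub> inv\<^bsub>G\<^esub> x \<otimes>\<^bsub>G\<^esub> inv\<^bsub>G\<^esub> y"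

text \<open>Solvable radical: the subgroup generated by all solvable normal subgroups
  (for a finite group this is the largest solvable normal subgroup).\<close>
definition solvable_radical :: "('a, 'b) monoid_scheme \<Rightarrow> 'a set" where
  "solvable_radical G =
     generate G (\<Union> {N. N \<lhd> G \<and> solvable (G\<lparr>carrier := N\<rparr>)})"

definition kappa_elem :: "('a, 'b) monoid_scheme \<Rightarrow> 'a \<Rightarrow> nat" where
  "kappa_elem G g = (LEAST n. \<exists>xs. length xs = n \<and> set xs \<subseteq> carrier G \<and>
      \<not> solvable (G\<lparr>carrier := generate G ((\<lambda>x. commutator G g x) ` set xs)\<rparr>))"

definition radical_degree :: "('a, 'b) monoid_scheme \<Rightarrow> nat" where
  "radical_degree G = Max (kappa_elem G ` (carrier G - solvable_radical G))"

end

theory Submission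
  imports Defs
begin

lemma perfect_not_solvable:
  assumes G: "group G" and K: "subgroup K G" and N: "subgroup N G" and KN: "K \<subseteq> N"
    and perf: "K \<subseteq> derived G K" and nt: "K \<noteq> {\<one>\<^bsub>G\<^esub>}"
  shows "\<not> solvable (G\<lparr>carrier := N\<rparr>)"
proof
  assume sol: "solvable (G\<lparr>carrier := N\<rparr>)"
  interpret G: group G by fact
  have GN: "group (G\<lparr>carrier := N\<rparr>)" using G.subgroup_imp_group[OF N] .
  then obtain m where m: "(derived (G\<lparr>carrier := N\<rparr>) ^^ m) N = {\<one>\<^bsub>G\<^esub>}"
    using group.solvable_iff_trivial_derived_seq[OF GN] sol by auto
  have dK: "derived G K = K" using perf G.derived_incl[OF order_refl K] by blast
  have eqK: "(derived (G\<lparr>carrier := N\<rparr>) ^^ k) K = K" for k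
  proof (induction k)
    case 0 then show ?case by simp
  next
    case (Suc k)
    have "derived (G\<lparr>carrier := N\<rparr>) K = derived G K" using G.derived_consistent[OF KN N] .
    then show ?case using Suc dK by simp
  qed
  have "(derived (G\<lparr>carrier := N\<rparr>) ^^ m) K \<subseteq> (derived (G\<lparr>carrier := N\<rparr>) ^^ m) N"
    using group.mono_exp_of_derived[OF GN] KN by auto
  then have "K \<subseteq> {\<one>\<^bsub>G\<^esub>}" using eqK m by simp
  moreover have "\<one>\<^bsub>G\<^esub> \<in> K" using K subgroup.one_closed by blast
  ultimately show False using nt by blast
qed

lemma abelian_solvable:
  assumes G: "group G" and H: "subgroup H G" and comm: "\<And>x y. x \<in> H \<Longrightarrow> y \<in> H \<Longrightarrow> x \<otimes>\<^bsub>G\<^esub> y = y \<otimes>\<^bsub>G\<^esub> x"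
  shows "solvable (G\<lparr>carrier := H\<rparr>)"
proof -
  interpret G: group G by fact
  have GH: "group (G\<lparr>carrier := H\<rparr>)" using G.subgroup_imp_group[OF H] .
  have CH: "comm_group (G\<lparr>carrier := H\<rparr>)"
    using group.group_comm_groupI[OF GH] comm by auto
  have "derived (G\<lparr>carrier := H\<rparr>) (carrier (G\<lparr>carrier := H\<rparr>)) = {\<one>\<^bsub>G\<lparr>carrier := H\<rparr>\<^esub>}"
    using comm_group.derived_eq_singleton[OF CH] by blast
  then have "(derived (G\<lparr>carrier := H\<rparr>) ^^ 1) (carrier (G\<lparr>carrier := H\<rparr>)) = {\<one>\<^bsub>G\<lparr>carrier := H\<rparr>\<^esub>}"
    by simp
  then show ?thesis using group.solvable_iff_trivial_derived_seq[OF GH] by blast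
qed

lemma generate_single_comm:
  assumes G: "group G" and c: "c \<in> carrier G" and x: "x \<in> generate G {c}" and y: "y \<in> generate G {c}"
  shows "x \<otimes>\<^bsub>G\<^esub> y = y \<otimes>\<^bsub>G\<^esub> x"
proof -
  interpret G: group G by fact
  obtain i j :: int where "x = c [^]\<^bsub>G\<^esub> i" "y = c [^]\<^bsub>G\<^esub> j"
    using x y G.generate_pow[OF c] by auto
  then show ?thesis using G.int_pow_mult[OF c, of i j] G.int_pow_mult[OF c, of j i] by (simp add: add.commute)
qed

definition cyc3 :: "nat \<Rightarrow> nat \<Rightarrow> nat \<Rightarrow> nat \<Rightarrow> nat" where
  "cyc3 p q r = (\<lambda>i. if i = p then q else if i = q then r else if i = r then p else i)"

lemma cyc3_apply: "cyc3 p q r i = (if i = p then q else if i = q then r else if i = r then p else i)"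
  by (simp add: cyc3_def)

lemma cyc3_transp: "p \<noteq> q \<Longrightarrow> q \<noteq> r \<Longrightarrow> p \<noteq> r \<Longrightarrow> cyc3 p q r = transpose p q \<circ> transpose q r"
  by (rule ext) (auto simp: cyc3_def transpose_def)

lemma cyc3_carrier:
  assumes "p \<noteq> q" "q \<noteq> r" "p \<noteq> r" "p \<in> {1..n}" "q \<in> {1..n}" "r \<in> {1..n}"
  shows "cyc3 p q r \<in> carrier (alt_group n)"
proof -
  have "cyc3 p q r permutes {1..n}"
    unfolding cyc3_transp[OF assms(1-3)]
    by (intro permutes_compose permutes_swap_id) (use assms in auto)
  moreover have "evenperm (cyc3 p q r)"
    unfolding cyc3_transp[OF assms(1-3)]
    by (simp add: evenperm_comp permutation_swap_id evenperm_swap assms)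
  ultimately show ?thesis by (simp add: alt_group_carrier)
qed

lemma cyc3_inv:
  assumes "p \<noteq> q" "q \<noteq> r" "p \<noteq> r"
  shows "inv' (cyc3 p q r) = cyc3 p r q"
  by (rule inv_unique_comp) (use assms in \<open>auto simp: cyc3_def fun_eq_iff\<close>)

lemma cyc3_conj_pt:
  assumes "inj g"
  shows "cyc3 (g p) (g q) (g r) (g j) = g (cyc3 p q r j)"
  using assms by (simp add: cyc3_def inj_eq)

lemma cyc3_conj:
  assumes "bij g"
  shows "g \<circ> cyc3 p q r \<circ> inv' g = cyc3 (g p) (g q) (g r)"
proof (rule ext)
  fix i
  have "i = g (inv' g i)" using assms by (simp add: bij_is_surj surj_f_inv_f)
  then show "(g \<circ> cyc3 p q r \<circ> inv' g) i = cyc3 (g p) (g q) (g r) i"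
    using cyc3_conj_pt[OF bij_is_inj[OF assms], of p q r "inv' g i"] by simp
qed

lemma alt_commutator:
  assumes "g \<in> carrier (alt_group n)" "x \<in> carrier (alt_group n)"
  shows "commutator (alt_group n) g x = g \<circ> x \<circ> inv' g \<circ> inv' x"
  using assms by (simp add: commutator_def alt_group_mult alt_group_inv_equality)

lemma alt_bij: "g \<in> carrier (alt_group n) \<Longrightarrow> bij g"
  using permutes_bij by (auto simp: alt_group_carrier)

lemma commutator_cyc3:
  assumes "g \<in> carrier (alt_group n)" "p \<noteq> q" "q \<noteq> r" "p \<noteq> r" "p \<in> {1..n}" "q \<in> {1..n}" "r \<in> {1..n}"
  shows "commutator (alt_group n) g (cyc3 p q r) = cyc3 (g p) (g q) (g r) \<circ> cyc3 p r q"
proof -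
  have "commutator (alt_group n) g (cyc3 p q r) = (g \<circ> cyc3 p q r \<circ> inv' g) \<circ> inv' (cyc3 p q r)"
    using alt_commutator[OF assms(1) cyc3_carrier[OF assms(2-7)]] by (simp add: comp_assoc)
  also have "\<dots> = cyc3 (g p) (g q) (g r) \<circ> cyc3 p r q"
    using cyc3_conj[OF alt_bij[OF assms(1)]] cyc3_inv[OF assms(2-4)] by simp
  finally show ?thesis .
qed

lemma (in group) comm_from_eq:
  assumes "u \<in> carrier G" "h1 \<in> carrier G" "h2 \<in> carrier G" "u \<otimes> h2 \<otimes> h1 = h1 \<otimes> h2"
  shows "u = h1 \<otimes> h2 \<otimes> inv h1 \<otimes> inv h2"
proof -
  have "h1 \<otimes> h2 \<otimes> inv h1 \<otimes> inv h2 = u \<otimes> h2 \<otimes> h1 \<otimes> inv h1 \<otimes> inv h2" using assms(4) by simp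
  also have "\<dots> = u" using assms(1-3) by (simp add: m_assoc)
  finally show ?thesis by simp
qed

lemma gen_incl1: "u \<in> generate G {u, v}" by (simp add: generate.incl)
lemma gen_incl2: "v \<in> generate G {u, v}" by (simp add: generate.incl)
lemma gen_comp: "x \<in> generate (alt_group n) S \<Longrightarrow> y \<in> generate (alt_group n) S \<Longrightarrow> x \<circ> y \<in> generate (alt_group n) S"
  using generate.eng[of x "alt_group n" S y] by (simp add: alt_group_mult)

lemma finish:
  fixes n :: nat
  defines "G \<equiv> alt_group n"
  assumes g: "g \<in> carrier G" and x1: "x1 \<in> carrier G" and x2: "x2 \<in> carrier G"
    and u: "commutator G g x1 = u" and v: "commutator G g x2 = v"
    and h: "h1 \<in> generate G {u, v}" "h2 \<in> generate G {u, v}" "h3 \<in> generate G {u, v}" "h4 \<in> generate G {u, v}"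
    and e1: "u \<circ> h2 \<circ> h1 = h1 \<circ> h2" and e2: "v \<circ> h4 \<circ> h3 = h3 \<circ> h4" and nid: "u \<noteq> id"
  shows "\<exists>x1\<in>carrier G. \<exists>x2\<in>carrier G. \<forall>N. subgroup N G \<longrightarrow>
           generate G {commutator G g x1, commutator G g x2} \<subseteq> N \<longrightarrow> \<not> solvable (G\<lparr>carrier := N\<rparr>)"
proof (rule bexI[OF _ x1], rule bexI[OF _ x2], intro allI impI)
  fix N assume N: "subgroup N G" and KN: "generate G {commutator G g x1, commutator G g x2} \<subseteq> N"
  interpret G: group G unfolding G_def by (rule alt_group_is_group)
  have uc: "u \<in> carrier G" and vc: "v \<in> carrier G"
    using u v g x1 x2 by (auto simp: commutator_def)
  define K where "K = generate G {u, v}"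
  have Ksub: "subgroup K G" unfolding K_def using uc vc by (intro G.generate_is_subgroup) auto
  have Kc: "K \<subseteq> carrier G" using Ksub subgroup.subset by blast
  have hc: "h1 \<in> carrier G" "h2 \<in> carrier G" "h3 \<in> carrier G" "h4 \<in> carrier G"
    using h Kc unfolding K_def by auto
  have mult: "\<And>a b. a \<otimes>\<^bsub>G\<^esub> b = a \<circ> b" unfolding G_def by (simp add: alt_group_mult)
  have "u = h1 \<otimes>\<^bsub>G\<^esub> h2 \<otimes>\<^bsub>G\<^esub> inv\<^bsub>G\<^esub> h1 \<otimes>\<^bsub>G\<^esub> inv\<^bsub>G\<^esub> h2"
    using G.comm_from_eq[OF uc hc(1,2)] e1 by (simp add: mult)
  then have "u \<in> derived_set G K" using h(1,2) unfolding K_def by blast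
  then have ud: "u \<in> derived G K" unfolding derived_def by (rule generate.incl)
  have "v = h3 \<otimes>\<^bsub>G\<^esub> h4 \<otimes>\<^bsub>G\<^esub> inv\<^bsub>G\<^esub> h3 \<otimes>\<^bsub>G\<^esub> inv\<^bsub>G\<^esub> h4"
    using G.comm_from_eq[OF vc hc(3,4)] e2 by (simp add: mult)
  then have "v \<in> derived_set G K" using h(3,4) unfolding K_def by blast
  then have vd: "v \<in> derived G K" unfolding derived_def by (rule generate.incl)
  have perf: "K \<subseteq> derived G K"
    unfolding K_def using ud vd G.derived_is_subgroup[OF Kc]
    by (intro G.generate_subgroup_incl) (auto simp: K_def)
  have nt: "K \<noteq> {\<one>\<^bsub>G\<^esub>}"
    using nid gen_incl1[of u G v] unfolding K_def G_def by (auto simp: alt_group_one)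
  have KN': "K \<subseteq> N" using KN u v unfolding K_def by simp
  show "\<not> solvable (G\<lparr>carrier := N\<rparr>)"
    using perfect_not_solvable[OF G.is_group Ksub N KN' perf nt] .
qed

lemma ext_list: "list_all (\<lambda>x. f x = g x) L \<Longrightarrow> (\<And>x. x \<notin> set L \<Longrightarrow> f x = g x) \<Longrightarrow> f = g"
proof (rule ext)
  fix x show "f x = g x" if "list_all (\<lambda>x. f x = g x) L" "\<And>x. x \<notin> set L \<Longrightarrow> f x = g x"
    using that by (cases "x \<in> set L") (auto simp: list_all_iff)
qed

definition good :: "nat \<Rightarrow> (nat \<Rightarrow> nat) \<Rightarrow> bool" where
  "good n g \<longleftrightarrow> (\<exists>x1\<in>carrier (alt_group n). \<exists>x2\<in>carrier (alt_group n). \<forall>N. subgroup N (alt_group n) \<longrightarrow>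
     generate (alt_group n) {commutator (alt_group n) g x1, commutator (alt_group n) g x2} \<subseteq> N \<longrightarrow>
     \<not> solvable ((alt_group n)\<lparr>carrier := N\<rparr>))"

lemma case_C5:
  assumes g: "g \<in> carrier (alt_group n)" and dist: "distinct [a, b, c, d, e]"
    and pts: "a \<in> {1..n}" "b \<in> {1..n}" "c \<in> {1..n}" "d \<in> {1..n}" "e \<in> {1..n}"
    and gv: "g a = b" "g b = c" "g c = d" "g d = e"
  shows "good n g"
proof -
  have neq: "a \<noteq> b" "a \<noteq> c" "a \<noteq> d" "a \<noteq> e" "b \<noteq> a" "b \<noteq> c" "b \<noteq> d" "b \<noteq> e" "c \<noteq> a" "c \<noteq> b" "c \<noteq> d" "c \<noteq> e" "d \<noteq> a" "d \<noteq> b" "d \<noteq> c" "d \<noteq> e" "e \<noteq> a" "e \<noteq> b" "e \<noteq> c" "e \<noteq> d" using dist by auto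
  have x1: "cyc3 a b d \<in> carrier (alt_group n)" by (rule cyc3_carrier) (use neq pts in auto)
  have x2: "cyc3 a c d \<in> carrier (alt_group n)" by (rule cyc3_carrier) (use neq pts in auto)
  define U where "U = (cyc3 b c e \<circ> cyc3 a d b)"
  define V where "V = (cyc3 b d e \<circ> cyc3 a d c)"
  have u: "commutator (alt_group n) g (cyc3 a b d) = U"
    using commutator_cyc3[OF g, of a b d] neq pts gv unfolding U_def by simp
  have v: "commutator (alt_group n) g (cyc3 a c d) = V"
    using commutator_cyc3[OF g, of a c d] neq pts gv unfolding V_def by simp
  have m1: "(V \<circ> U) \<in> generate (alt_group n) {U, V}"
    by (intro gen_comp gen_incl1 gen_incl2)
  have m2: "(V) \<in> generate (alt_group n) {U, V}"
    by (intro gen_comp gen_incl1 gen_incl2)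
  have m3: "(U \<circ> V) \<in> generate (alt_group n) {U, V}"
    by (intro gen_comp gen_incl1 gen_incl2)
  have m4: "(U) \<in> generate (alt_group n) {U, V}"
    by (intro gen_comp gen_incl1 gen_incl2)
  have e1: "U \<circ> (V) \<circ> (V \<circ> U) = (V \<circ> U) \<circ> (V)"
    unfolding U_def V_def by (rule ext_list[where L="[a, b, c, d, e]"]) (simp only: list.pred_inject, simp_all add: cyc3_apply neq)
  have e2: "V \<circ> (U) \<circ> (U \<circ> V) = (U \<circ> V) \<circ> (U)"
    unfolding U_def V_def by (rule ext_list[where L="[a, b, c, d, e]"]) (simp only: list.pred_inject, simp_all add: cyc3_apply neq)
  have nid: "U \<noteq> id"
  proof
    assume "U = id"
    then have "U a = a" by simp
    then show False by (simp add: U_def cyc3_apply neq)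
  qed
  show ?thesis unfolding good_def by (rule finish[OF g x1 x2 u v m1 m2 m3 m4 e1 e2 nid])
qed

lemma case_C4:
  assumes g: "g \<in> carrier (alt_group n)" and dist: "distinct [a, b, c, d, e, f]"
    and pts: "a \<in> {1..n}" "b \<in> {1..n}" "c \<in> {1..n}" "d \<in> {1..n}" "e \<in> {1..n}" "f \<in> {1..n}"
    and gv: "g a = b" "g b = c" "g c = d" "g d = a" "g e = f"
  shows "good n g"
proof -
  have neq: "a \<noteq> b" "a \<noteq> c" "a \<noteq> d" "a \<noteq> e" "a \<noteq> f" "b \<noteq> a" "b \<noteq> c" "b \<noteq> d" "b \<noteq> e" "b \<noteq> f" "c \<noteq> a" "c \<noteq> b" "c \<noteq> d" "c \<noteq> e" "c \<noteq> f" "d \<noteq> a" "d \<noteq> b" "d \<noteq> c" "d \<noteq> e" "d \<noteq> f" "e \<noteq> a" "e \<noteq> b" "e \<noteq> c" "e \<noteq> d" "e \<noteq> f" "f \<noteq> a" "f \<noteq> b" "f \<noteq> c" "f \<noteq> d" "f \<noteq> e" using dist by auto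
  have x1: "cyc3 a b e \<in> carrier (alt_group n)" by (rule cyc3_carrier) (use neq pts in auto)
  have x2: "cyc3 a e b \<in> carrier (alt_group n)" by (rule cyc3_carrier) (use neq pts in auto)
  define U where "U = (cyc3 b c f \<circ> cyc3 a e b)"
  define V where "V = (cyc3 b f c \<circ> cyc3 a b e)"
  have u: "commutator (alt_group n) g (cyc3 a b e) = U"
    using commutator_cyc3[OF g, of a b e] neq pts gv unfolding U_def by simp
  have v: "commutator (alt_group n) g (cyc3 a e b) = V"
    using commutator_cyc3[OF g, of a e b] neq pts gv unfolding V_def by simp
  have m1: "(V) \<in> generate (alt_group n) {U, V}"
    by (intro gen_comp gen_incl1 gen_incl2)
  have m2: "(V \<circ> V \<circ> V \<circ> U) \<in> generate (alt_group n) {U, V}"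
    by (intro gen_comp gen_incl1 gen_incl2)
  have m3: "(U) \<in> generate (alt_group n) {U, V}"
    by (intro gen_comp gen_incl1 gen_incl2)
  have m4: "(U \<circ> U \<circ> U \<circ> V) \<in> generate (alt_group n) {U, V}"
    by (intro gen_comp gen_incl1 gen_incl2)
  have e1: "U \<circ> (V \<circ> V \<circ> V \<circ> U) \<circ> (V) = (V) \<circ> (V \<circ> V \<circ> V \<circ> U)"
    unfolding U_def V_def by (rule ext_list[where L="[a, b, c, d, e, f]"]) (simp only: list.pred_inject, simp_all add: cyc3_apply neq)
  have e2: "V \<circ> (U \<circ> U \<circ> U \<circ> V) \<circ> (U) = (U) \<circ> (U \<circ> U \<circ> U \<circ> V)"
    unfolding U_def V_def by (rule ext_list[where L="[a, b, c, d, e, f]"]) (simp only: list.pred_inject, simp_all add: cyc3_apply neq)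
  have nid: "U \<noteq> id"
  proof
    assume "U = id"
    then have "U a = a" by simp
    then show False by (simp add: U_def cyc3_apply neq)
  qed
  show ?thesis unfolding good_def by (rule finish[OF g x1 x2 u v m1 m2 m3 m4 e1 e2 nid])
qed

lemma case_C3a:
  assumes g: "g \<in> carrier (alt_group n)" and dist: "distinct [a, b, c, d, e]"
    and pts: "a \<in> {1..n}" "b \<in> {1..n}" "c \<in> {1..n}" "d \<in> {1..n}" "e \<in> {1..n}"
    and gv: "g a = b" "g b = c" "g c = a" "g d = e"
  shows "good n g"
proof -
  have neq: "a \<noteq> b" "a \<noteq> c" "a \<noteq> d" "a \<noteq> e" "b \<noteq> a" "b \<noteq> c" "b \<noteq> d" "b \<noteq> e" "c \<noteq> a" "c \<noteq> b" "c \<noteq> d" "c \<noteq> e" "d \<noteq> a" "d \<noteq> b" "d \<noteq> c" "d \<noteq> e" "e \<noteq> a" "e \<noteq> b" "e \<noteq> c" "e \<noteq> d" using dist by auto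
  have x1: "cyc3 a b d \<in> carrier (alt_group n)" by (rule cyc3_carrier) (use neq pts in auto)
  have x2: "cyc3 a d b \<in> carrier (alt_group n)" by (rule cyc3_carrier) (use neq pts in auto)
  define U where "U = (cyc3 b c e \<circ> cyc3 a d b)"
  define V where "V = (cyc3 b e c \<circ> cyc3 a b d)"
  have u: "commutator (alt_group n) g (cyc3 a b d) = U"
    using commutator_cyc3[OF g, of a b d] neq pts gv unfolding U_def by simp
  have v: "commutator (alt_group n) g (cyc3 a d b) = V"
    using commutator_cyc3[OF g, of a d b] neq pts gv unfolding V_def by simp
  have m1: "(V) \<in> generate (alt_group n) {U, V}"
    by (intro gen_comp gen_incl1 gen_incl2)
  have m2: "(V \<circ> V \<circ> V \<circ> U) \<in> generate (alt_group n) {U, V}"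
    by (intro gen_comp gen_incl1 gen_incl2)
  have m3: "(U) \<in> generate (alt_group n) {U, V}"
    by (intro gen_comp gen_incl1 gen_incl2)
  have m4: "(U \<circ> U \<circ> U \<circ> V) \<in> generate (alt_group n) {U, V}"
    by (intro gen_comp gen_incl1 gen_incl2)
  have e1: "U \<circ> (V \<circ> V \<circ> V \<circ> U) \<circ> (V) = (V) \<circ> (V \<circ> V \<circ> V \<circ> U)"
    unfolding U_def V_def by (rule ext_list[where L="[a, b, c, d, e]"]) (simp only: list.pred_inject, simp_all add: cyc3_apply neq)
  have e2: "V \<circ> (U \<circ> U \<circ> U \<circ> V) \<circ> (U) = (U) \<circ> (U \<circ> U \<circ> U \<circ> V)"
    unfolding U_def V_def by (rule ext_list[where L="[a, b, c, d, e]"]) (simp only: list.pred_inject, simp_all add: cyc3_apply neq)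
  have nid: "U \<noteq> id"
  proof
    assume "U = id"
    then have "U a = a" by simp
    then show False by (simp add: U_def cyc3_apply neq)
  qed
  show ?thesis unfolding good_def by (rule finish[OF g x1 x2 u v m1 m2 m3 m4 e1 e2 nid])
qed

lemma case_C3b:
  assumes g: "g \<in> carrier (alt_group n)" and dist: "distinct [a, b, c, d, e]"
    and pts: "a \<in> {1..n}" "b \<in> {1..n}" "c \<in> {1..n}" "d \<in> {1..n}" "e \<in> {1..n}"
    and gv: "g a = b" "g b = c" "g c = a" "g d = d" "g e = e"
  shows "good n g"
proof -
  have neq: "a \<noteq> b" "a \<noteq> c" "a \<noteq> d" "a \<noteq> e" "b \<noteq> a" "b \<noteq> c" "b \<noteq> d" "b \<noteq> e" "c \<noteq> a" "c \<noteq> b" "c \<noteq> d" "c \<noteq> e" "d \<noteq> a" "d \<noteq> b" "d \<noteq> c" "d \<noteq> e" "e \<noteq> a" "e \<noteq> b" "e \<noteq> c" "e \<noteq> d" using dist by auto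
  have x1: "cyc3 a d e \<in> carrier (alt_group n)" by (rule cyc3_carrier) (use neq pts in auto)
  have x2: "cyc3 b e d \<in> carrier (alt_group n)" by (rule cyc3_carrier) (use neq pts in auto)
  define U where "U = (cyc3 b d e \<circ> cyc3 a e d)"
  define V where "V = (cyc3 c e d \<circ> cyc3 b d e)"
  have u: "commutator (alt_group n) g (cyc3 a d e) = U"
    using commutator_cyc3[OF g, of a d e] neq pts gv unfolding U_def by simp
  have v: "commutator (alt_group n) g (cyc3 b e d) = V"
    using commutator_cyc3[OF g, of b e d] neq pts gv unfolding V_def by simp
  have m1: "(V \<circ> U \<circ> U \<circ> V) \<in> generate (alt_group n) {U, V}"
    by (intro gen_comp gen_incl1 gen_incl2)
  have m2: "(V \<circ> U \<circ> V) \<in> generate (alt_group n) {U, V}"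
    by (intro gen_comp gen_incl1 gen_incl2)
  have m3: "(U \<circ> V \<circ> U \<circ> U) \<in> generate (alt_group n) {U, V}"
    by (intro gen_comp gen_incl1 gen_incl2)
  have m4: "(U \<circ> V \<circ> U) \<in> generate (alt_group n) {U, V}"
    by (intro gen_comp gen_incl1 gen_incl2)
  have e1: "U \<circ> (V \<circ> U \<circ> V) \<circ> (V \<circ> U \<circ> U \<circ> V) = (V \<circ> U \<circ> U \<circ> V) \<circ> (V \<circ> U \<circ> V)"
    unfolding U_def V_def by (rule ext_list[where L="[a, b, c, d, e]"]) (simp only: list.pred_inject, simp_all add: cyc3_apply neq)
  have e2: "V \<circ> (U \<circ> V \<circ> U) \<circ> (U \<circ> V \<circ> U \<circ> U) = (U \<circ> V \<circ> U \<circ> U) \<circ> (U \<circ> V \<circ> U)"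
    unfolding U_def V_def by (rule ext_list[where L="[a, b, c, d, e]"]) (simp only: list.pred_inject, simp_all add: cyc3_apply neq)
  have nid: "U \<noteq> id"
  proof
    assume "U = id"
    then have "U a = a" by simp
    then show False by (simp add: U_def cyc3_apply neq)
  qed
  show ?thesis unfolding good_def by (rule finish[OF g x1 x2 u v m1 m2 m3 m4 e1 e2 nid])
qed

lemma case_C2a:
  assumes g: "g \<in> carrier (alt_group n)" and dist: "distinct [a, b, c, d, e]"
    and pts: "a \<in> {1..n}" "b \<in> {1..n}" "c \<in> {1..n}" "d \<in> {1..n}" "e \<in> {1..n}"
    and gv: "g a = b" "g b = a" "g c = d" "g d = c" "g e = e"
  shows "good n g"
proof -
  have neq: "a \<noteq> b" "a \<noteq> c" "a \<noteq> d" "a \<noteq> e" "b \<noteq> a" "b \<noteq> c" "b \<noteq> d" "b \<noteq> e" "c \<noteq> a" "c \<noteq> b" "c \<noteq> d" "c \<noteq> e" "d \<noteq> a" "d \<noteq> b" "d \<noteq> c" "d \<noteq> e" "e \<noteq> a" "e \<noteq> b" "e \<noteq> c" "e \<noteq> d" using dist by auto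
  have x1: "cyc3 a c e \<in> carrier (alt_group n)" by (rule cyc3_carrier) (use neq pts in auto)
  have x2: "cyc3 b e d \<in> carrier (alt_group n)" by (rule cyc3_carrier) (use neq pts in auto)
  define U where "U = (cyc3 b d e \<circ> cyc3 a e c)"
  define V where "V = (cyc3 a e c \<circ> cyc3 b d e)"
  have u: "commutator (alt_group n) g (cyc3 a c e) = U"
    using commutator_cyc3[OF g, of a c e] neq pts gv unfolding U_def by simp
  have v: "commutator (alt_group n) g (cyc3 b e d) = V"
    using commutator_cyc3[OF g, of b e d] neq pts gv unfolding V_def by simp
  have m1: "(V \<circ> U) \<in> generate (alt_group n) {U, V}"
    by (intro gen_comp gen_incl1 gen_incl2)
  have m2: "(V) \<in> generate (alt_group n) {U, V}"
    by (intro gen_comp gen_incl1 gen_incl2)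
  have m3: "(U \<circ> V) \<in> generate (alt_group n) {U, V}"
    by (intro gen_comp gen_incl1 gen_incl2)
  have m4: "(U) \<in> generate (alt_group n) {U, V}"
    by (intro gen_comp gen_incl1 gen_incl2)
  have e1: "U \<circ> (V) \<circ> (V \<circ> U) = (V \<circ> U) \<circ> (V)"
    unfolding U_def V_def by (rule ext_list[where L="[a, b, c, d, e]"]) (simp only: list.pred_inject, simp_all add: cyc3_apply neq)
  have e2: "V \<circ> (U) \<circ> (U \<circ> V) = (U \<circ> V) \<circ> (U)"
    unfolding U_def V_def by (rule ext_list[where L="[a, b, c, d, e]"]) (simp only: list.pred_inject, simp_all add: cyc3_apply neq)
  have nid: "U \<noteq> id"
  proof
    assume "U = id"
    then have "U a = a" by simp
    then show False by (simp add: U_def cyc3_apply neq)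
  qed
  show ?thesis unfolding good_def by (rule finish[OF g x1 x2 u v m1 m2 m3 m4 e1 e2 nid])
qed

lemma case_C2c:
  assumes g: "g \<in> carrier (alt_group n)" and dist: "distinct [a, b, c, d, e, f, h, k]"
    and pts: "a \<in> {1..n}" "b \<in> {1..n}" "c \<in> {1..n}" "d \<in> {1..n}" "e \<in> {1..n}" "f \<in> {1..n}" "h \<in> {1..n}" "k \<in> {1..n}"
    and gv: "g a = b" "g b = a" "g c = d" "g d = c" "g e = f" "g f = e" "g h = k" "g k = h"
  shows "good n g"
proof -
  have neq: "a \<noteq> b" "a \<noteq> c" "a \<noteq> d" "a \<noteq> e" "a \<noteq> f" "a \<noteq> h" "a \<noteq> k" "b \<noteq> a" "b \<noteq> c" "b \<noteq> d" "b \<noteq> e" "b \<noteq> f" "b \<noteq> h" "b \<noteq> k" "c \<noteq> a" "c \<noteq> b" "c \<noteq> d" "c \<noteq> e" "c \<noteq> f" "c \<noteq> h" "c \<noteq> k" "d \<noteq> a" "d \<noteq> b" "d \<noteq> c" "d \<noteq> e" "d \<noteq> f" "d \<noteq> h" "d \<noteq> k" "e \<noteq> a" "e \<noteq> b" "e \<noteq> c" "e \<noteq> d" "e \<noteq> f" "e \<noteq> h" "e \<noteq> k" "f \<noteq> a" "f \<noteq> b" "f \<noteq> c" "f \<noteq> d" "f \<noteq> e" "f \<noteq> h" "f \<noteq> k" "h \<noteq> a" "h \<noteq> b" "h \<noteq> c" "h \<noteq> d" "h \<noteq> e" "h \<noteq> f" "h \<noteq> k" "k \<noteq> a" "k \<noteq>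 b" "k \<noteq> c" "k \<noteq> d" "k \<noteq> e" "k \<noteq> f" "k \<noteq> h" using dist by auto
  have x1: "cyc3 a c e \<in> carrier (alt_group n)" by (rule cyc3_carrier) (use neq pts in auto)
  have x2: "cyc3 a d h \<in> carrier (alt_group n)" by (rule cyc3_carrier) (use neq pts in auto)
  define U where "U = (cyc3 b d f \<circ> cyc3 a e c)"
  define V where "V = (cyc3 b c k \<circ> cyc3 a h d)"
  have u: "commutator (alt_group n) g (cyc3 a c e) = U"
    using commutator_cyc3[OF g, of a c e] neq pts gv unfolding U_def by simp
  have v: "commutator (alt_group n) g (cyc3 a d h) = V"
    using commutator_cyc3[OF g, of a d h] neq pts gv unfolding V_def by simp
  have m1: "(V \<circ> U \<circ> V) \<in> generate (alt_group n) {U, V}"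
    by (intro gen_comp gen_incl1 gen_incl2)
  have m2: "(V \<circ> U \<circ> V \<circ> U \<circ> U) \<in> generate (alt_group n) {U, V}"
    by (intro gen_comp gen_incl1 gen_incl2)
  have m3: "(U \<circ> V \<circ> U) \<in> generate (alt_group n) {U, V}"
    by (intro gen_comp gen_incl1 gen_incl2)
  have m4: "(U \<circ> V \<circ> U \<circ> V \<circ> V) \<in> generate (alt_group n) {U, V}"
    by (intro gen_comp gen_incl1 gen_incl2)
  have e1: "U \<circ> (V \<circ> U \<circ> V \<circ> U \<circ> U) \<circ> (V \<circ> U \<circ> V) = (V \<circ> U \<circ> V) \<circ> (V \<circ> U \<circ> V \<circ> U \<circ> U)"
    unfolding U_def V_def by (rule ext_list[where L="[a, b, c, d, e, f, h, k]"]) (simp only: list.pred_inject, simp_all add: cyc3_apply neq)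
  have e2: "V \<circ> (U \<circ> V \<circ> U \<circ> V \<circ> V) \<circ> (U \<circ> V \<circ> U) = (U \<circ> V \<circ> U) \<circ> (U \<circ> V \<circ> U \<circ> V \<circ> V)"
    unfolding U_def V_def by (rule ext_list[where L="[a, b, c, d, e, f, h, k]"]) (simp only: list.pred_inject, simp_all add: cyc3_apply neq)
  have nid: "U \<noteq> id"
  proof
    assume "U = id"
    then have "U a = a" by simp
    then show False by (simp add: U_def cyc3_apply neq)
  qed
  show ?thesis unfolding good_def by (rule finish[OF g x1 x2 u v m1 m2 m3 m4 e1 e2 nid])
qed

lemma avail:
  assumes "finite S" "card S < n" shows "\<exists>e\<in>{1..n}. e \<notin> S"
proof (rule ccontr)
  assume "\<not> ?thesis" then have "{1..n} \<subseteq> S" by auto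
  then have "card {1..n} \<le> card S" by (rule card_mono[OF assms(1)])
  then show False using assms(2) by simp
qed

lemma odd1: "a \<noteq> b \<Longrightarrow> \<not> evenperm (transpose a b)"
  by (simp add: evenperm_swap)

lemma odd3:
  assumes "a \<noteq> b" "c \<noteq> d" "e \<noteq> f"
  shows "\<not> evenperm (transpose a b \<circ> transpose c d \<circ> transpose e f)"
  using assms by (simp add: evenperm_comp permutation_compose permutation_swap_id evenperm_swap)

lemma main_good:
  assumes n: "n \<ge> 5" and g: "g \<in> carrier (alt_group n)" and gid: "g \<noteq> id"
  shows "good n g"
proof -
  have perm: "g permutes {1..n}" and ev: "evenperm g" using g by (auto simp: alt_group_carrier)
  have gi: "\<And>x y. g x = g y \<longleftrightarrow> x = y" using permutes_inj[OF perm] by (simp add: inj_eq)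
  have img: "\<And>i. i \<in> {1..n} \<Longrightarrow> g i \<in> {1..n}" using permutes_in_image[OF perm] by blast
  have mv: "\<And>i. g i \<noteq> i \<Longrightarrow> i \<in> {1..n}" using permutes_not_in[OF perm] by blast
  show ?thesis
  proof (cases "\<exists>a. distinct [a, g a, g (g a), g (g (g a))]")
    case True
    then obtain a b c d where D: "distinct [a, b, c, d]" and gv: "g a = b" "g b = c" "g c = d"
      by blast
    have pa: "a \<in> {1..n}" using mv D gv by auto
    have pb: "b \<in> {1..n}" using img[OF pa] gv by simp
    have pc: "c \<in> {1..n}" using img[OF pb] gv by simp
    have pd: "d \<in> {1..n}" using img[OF pc] gv by simp
    show ?thesis
    proof (cases "g d = a")
      case True
      have "\<exists>e. e \<notin> {a, b, c, d} \<and> g e \<noteq> e"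
      proof (rule ccontr)
        assume "\<not> ?thesis"
        then have fx: "\<And>e. e \<notin> {a, b, c, d} \<Longrightarrow> g e = e" by blast
        have "g = transpose a b \<circ> transpose b c \<circ> transpose c d"
        proof (rule ext)
          fix x
          show "g x = (transpose a b \<circ> transpose b c \<circ> transpose c d) x"
            using D gv True fx[of x] by (auto simp: transpose_def)
        qed
        then show False using odd3[of a b b c c d] D ev by auto
      qed
      then obtain e where e: "e \<notin> {a, b, c, d}" "g e \<noteq> e" by blast
      define f where "f = g e"
      have pe: "e \<in> {1..n}" using mv e by blast
      have pf: "f \<in> {1..n}" using img[OF pe] f_def by simp
      have "g e \<notin> {g a, g b, g c, g d}" using e(1) gi by simp
      then have "f \<notin> {a, b, c, d}" using gv True f_def by auto
      then have "distinct [a, b, c, d, e, f]"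
        using D e f_def by auto
      then show ?thesis
        using case_C4[OF g _ pa pb pc pd pe pf gv True f_def[symmetric]] by simp
    next
      case False
      define e where "e = g d"
      have pe: "e \<in> {1..n}" using img[OF pd] e_def by simp
      have "g d \<notin> {g a, g b, g c}" using D gi by simp
      then have "e \<notin> {a, b, c, d}" using gv False e_def by auto
      then have "distinct [a, b, c, d, e]" using D by auto
      then show ?thesis
        using case_C5[OF g _ pa pb pc pd pe gv e_def[symmetric]] by simp
    qed
  next
    case notP4: False
    show ?thesis
    proof (cases "\<exists>a. distinct [a, g a, g (g a)]")
      case True
      then obtain a b c where D: "distinct [a, b, c]" and gv: "g a = b" "g b = c"
        by blast
      have gc: "g c = a"
      proof (rule ccontr)
        assume "g c \<noteq> a"
        moreover have "g c \<notin> {g a, g b}" using D gi by simp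
        ultimately have "distinct [a, b, c, g c]" using D gv by auto
        then have "distinct [a, g a, g (g a), g (g (g a))]" by (simp add: gv)
        then show False using notP4 by blast
      qed
      have pa: "a \<in> {1..n}" using mv D gv by auto
      have pb: "b \<in> {1..n}" using img[OF pa] gv by simp
      have pc: "c \<in> {1..n}" using img[OF pb] gv by simp
      show ?thesis
      proof (cases "\<exists>d. d \<notin> {a, b, c} \<and> g d \<noteq> d")
        case True
        then obtain d where d: "d \<notin> {a, b, c}" "g d \<noteq> d" by blast
        define e where "e = g d"
        have pd: "d \<in> {1..n}" using mv d by blast
        have pe: "e \<in> {1..n}" using img[OF pd] e_def by simp
        have "g d \<notin> {g a, g b, g c}" using d(1) gi by simp
        then have "e \<notin> {a, b, c, d}" using gv gc e_def d(2) by auto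
        then have "distinct [a, b, c, d, e]" using D d by auto
        then show ?thesis
          using case_C3a[OF g _ pa pb pc pd pe gv gc e_def[symmetric]] by simp
      next
        case False
        obtain d where d: "d \<in> {1..n}" "d \<notin> {a, b, c}"
          using avail[of "{a, b, c}" n] n card_length[of "[a, b, c]"] by auto
        obtain e where e: "e \<in> {1..n}" "e \<notin> {a, b, c, d}"
          using avail[of "{a, b, c, d}" n] n card_length[of "[a, b, c, d]"] by auto
        have gd: "g d = d" and ge: "g e = e" using False d e by auto
        have "distinct [a, b, c, d, e]" using D d e by auto
        then show ?thesis
          using case_C3b[OF g _ pa pb pc d(1) e(1) gv gc gd ge] by simp
      qed
    next
      case notP3: False
      have inv2: "g (g x) = x" for x
      proof (cases "g x = x")
        case True then show ?thesis by simp
      next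
        case False
        have "\<not> distinct [x, g x, g (g x)]" using notP3 by blast
        then show ?thesis using False gi by auto
      qed
      obtain a where a: "g a \<noteq> a" using gid by (auto simp: fun_eq_iff)
      define b where "b = g a"
      have gb: "g b = a" using inv2 b_def by simp
      have pa: "a \<in> {1..n}" using mv a by blast
      have pb: "b \<in> {1..n}" using img[OF pa] b_def by simp
      have "\<exists>c. c \<notin> {a, b} \<and> g c \<noteq> c"
      proof (rule ccontr)
        assume "\<not> ?thesis"
        then have fx: "\<And>e. e \<notin> {a, b} \<Longrightarrow> g e = e" by blast
        have "g = transpose a b"
        proof (rule ext)
          fix x
          show "g x = transpose a b x"
            using b_def gb fx[of x] by (auto simp: transpose_def)
        qed
        then show False using odd1[of a b] a b_def ev by auto
      qed
      then obtain c where c: "c \<notin> {a, b}" "g c \<noteq> c" by blast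
      define d where "d = g c"
      have gd: "g d = c" using inv2 d_def by simp
      have pc: "c \<in> {1..n}" using mv c by blast
      have pd: "d \<in> {1..n}" using img[OF pc] d_def by simp
      have "g c \<notin> {g a, g b}" using c(1) gi by simp
      then have "d \<notin> {a, b, c}" using b_def gb d_def c(2) by auto
      then have D4: "distinct [a, b, c, d]" using a b_def c by auto
      show ?thesis
      proof (cases "\<exists>e\<in>{1..n}. e \<notin> {a, b, c, d} \<and> g e = e")
        case True
        then obtain e where e: "e \<in> {1..n}" "e \<notin> {a, b, c, d}" "g e = e" by blast
        have "distinct [a, b, c, d, e]" using D4 e by auto
        then show ?thesis
          using case_C2a[OF g _ pa pb pc pd e(1) b_def[symmetric] gb d_def[symmetric] gd e(3)] by simp
      next
        case nofix: False
        obtain e where e: "e \<in> {1..n}" "e \<notin> {a, b, c, d}"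
          using avail[of "{a, b, c, d}" n] n card_length[of "[a, b, c, d]"] by auto
        define f where "f = g e"
        have gf: "g f = e" using inv2 f_def by simp
        have ge: "g e \<noteq> e" using nofix e by blast
        have pf: "f \<in> {1..n}" using img[OF e(1)] f_def by simp
        have "g e \<notin> {g a, g b, g c, g d}" using e(2) gi by simp
        then have "f \<notin> {a, b, c, d, e}" using b_def gb d_def gd f_def ge by auto
        then have D6: "distinct [a, b, c, d, e, f]" using D4 e by auto
        show ?thesis
        proof (cases "\<exists>h\<in>{1..n}. h \<notin> {a, b, c, d, e, f}")
          case True
          then obtain h where h: "h \<in> {1..n}" "h \<notin> {a, b, c, d, e, f}" by blast
          define k where "k = g h"
          have gk: "g k = h" using inv2 k_def by simp
          have gh: "g h \<noteq> h" using nofix h by blast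
          have pk: "k \<in> {1..n}" using img[OF h(1)] k_def by simp
          have "g h \<notin> {g a, g b, g c, g d, g e, g f}" using h(2) gi by simp
          then have "k \<notin> {a, b, c, d, e, f, h}" using b_def gb d_def gd f_def gf k_def gh by auto
          then have "distinct [a, b, c, d, e, f, h, k]" using D6 h by auto
          then show ?thesis
            using case_C2c[OF g _ pa pb pc pd e(1) pf h(1) pk b_def[symmetric] gb d_def[symmetric] gd
                f_def[symmetric] gf k_def[symmetric] gk] by simp
        next
          case False
          have "g = transpose a b \<circ> transpose c d \<circ> transpose e f"
          proof (rule ext)
            fix x
            show "g x = (transpose a b \<circ> transpose c d \<circ> transpose e f) x"
            proof (cases "x \<in> {1..n}")
              case True
              then have "x \<in> {a, b, c, d, e, f}" using False by blast
              then show ?thesis using D6 b_def gb d_def gd f_def gf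
                by (auto simp: transpose_def)
            next
              case xn: False
              then have "g x = x" using permutes_not_in[OF perm] by blast
              moreover have "x \<notin> {a, b, c, d, e, f}" using xn pa pb pc pd e(1) pf by blast
              ultimately show ?thesis by (auto simp: transpose_def)
            qed
          qed
          then have False using odd3[of a b c d e f] D6 ev by auto
          then show ?thesis ..
        qed
      qed
    qed
  qed
qed

lemma alt_comm_in_normal:
  assumes N: "N \<lhd> alt_group n" and gN: "g \<in> N" and x: "x \<in> carrier (alt_group n)"
  shows "commutator (alt_group n) g x \<in> N"
proof -
  interpret G: group "alt_group n" by (rule alt_group_is_group)
  interpret N: normal N "alt_group n" by (rule N)
  have gc: "g \<in> carrier (alt_group n)" using gN N.subset by blast
  have "x \<otimes>\<^bsub>alt_group n\<^esub> inv\<^bsub>alt_group n\<^esub> g \<otimes>\<^bsub>alt_group n\<^esub> inv\<^bsub>alt_group n\<^esub> x \<in> N"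
    using N.inv_op_closed2[OF x N.m_inv_closed[OF gN]] .
  then have "g \<otimes>\<^bsub>alt_group n\<^esub> (x \<otimes>\<^bsub>alt_group n\<^esub> inv\<^bsub>alt_group n\<^esub> g \<otimes>\<^bsub>alt_group n\<^esub> inv\<^bsub>alt_group n\<^esub> x) \<in> N"
    using gN N.m_closed by blast
  then show ?thesis unfolding commutator_def using gc x by (simp add: G.m_assoc)
qed

lemma radical_alt:
  assumes n: "n \<ge> 5"
  shows "solvable_radical (alt_group n) = {id}"
proof -
  interpret G: group "alt_group n" by (rule alt_group_is_group)
  have sub: "\<Union> {N. N \<lhd> alt_group n \<and> solvable ((alt_group n)\<lparr>carrier := N\<rparr>)} \<subseteq> {id}"
  proof
    fix g assume "g \<in> \<Union> {N. N \<lhd> alt_group n \<and> solvable ((alt_group n)\<lparr>carrier := N\<rparr>)}"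
    then obtain N where N: "N \<lhd> alt_group n" and sol: "solvable ((alt_group n)\<lparr>carrier := N\<rparr>)" and gN: "g \<in> N"
      by blast
    have Nsub: "subgroup N (alt_group n)" using N normal_imp_subgroup by blast
    have gc: "g \<in> carrier (alt_group n)" using gN Nsub subgroup.subset by blast
    show "g \<in> {id}"
    proof (rule ccontr)
      assume "g \<notin> {id}"
      then have "good n g" using main_good[OF n gc] by simp
      then obtain x1 x2 where x1: "x1 \<in> carrier (alt_group n)" and x2: "x2 \<in> carrier (alt_group n)"
        and H: "\<And>M. subgroup M (alt_group n) \<Longrightarrow>
           generate (alt_group n) {commutator (alt_group n) g x1, commutator (alt_group n) g x2} \<subseteq> M \<Longrightarrow>
           \<not> solvable ((alt_group n)\<lparr>carrier := M\<rparr>)"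
        unfolding good_def by blast
      have "generate (alt_group n) {commutator (alt_group n) g x1, commutator (alt_group n) g x2} \<subseteq> N"
        using alt_comm_in_normal[OF N gN x1] alt_comm_in_normal[OF N gN x2]
        by (intro G.generate_subgroup_incl[OF _ Nsub]) auto
      then show False using H[OF Nsub] sol by blast
    qed
  qed
  have "generate (alt_group n) (\<Union> {N. N \<lhd> alt_group n \<and> solvable ((alt_group n)\<lparr>carrier := N\<rparr>)}) \<subseteq> generate (alt_group n) {\<one>\<^bsub>alt_group n\<^esub>}"
    using G.mono_generate sub by (simp add: alt_group_one)
  then have "generate (alt_group n) (\<Union> {N. N \<lhd> alt_group n \<and> solvable ((alt_group n)\<lparr>carrier := N\<rparr>)}) \<subseteq> {id}"
    using G.generate_one by (simp add: alt_group_one)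
  moreover have "id \<in> generate (alt_group n) (\<Union> {N. N \<lhd> alt_group n \<and> solvable ((alt_group n)\<lparr>carrier := N\<rparr>)})"
    using generate.one[of "alt_group n"] by (simp add: alt_group_one)
  ultimately show ?thesis unfolding solvable_radical_def by blast
qed

lemma kappa_alt:
  assumes n: "n \<ge> 5" and gc: "g \<in> carrier (alt_group n)" and gid: "g \<noteq> id"
  shows "kappa_elem (alt_group n) g = 2"
proof -
  interpret G: group "alt_group n" by (rule alt_group_is_group)
  have commc: "\<And>x. x \<in> carrier (alt_group n) \<Longrightarrow> commutator (alt_group n) g x \<in> carrier (alt_group n)"
    using gc by (simp add: commutator_def)
  let ?P = "\<lambda>m. \<exists>xs. length xs = m \<and> set xs \<subseteq> carrier (alt_group n) \<and>
      \<not> solvable ((alt_group n)\<lparr>carrier := generate (alt_group n) ((\<lambda>x. commutator (alt_group n) g x) ` set xs)\<rparr>)"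
  have P2: "?P 2"
  proof -
    obtain x1 x2 where x1: "x1 \<in> carrier (alt_group n)" and x2: "x2 \<in> carrier (alt_group n)"
        and H: "\<And>M. subgroup M (alt_group n) \<Longrightarrow>
           generate (alt_group n) {commutator (alt_group n) g x1, commutator (alt_group n) g x2} \<subseteq> M \<Longrightarrow>
           \<not> solvable ((alt_group n)\<lparr>carrier := M\<rparr>)"
      using main_good[OF n gc gid] unfolding good_def by blast
    have "subgroup (generate (alt_group n) {commutator (alt_group n) g x1, commutator (alt_group n) g x2}) (alt_group n)"
      using commc[OF x1] commc[OF x2] by (intro G.generate_is_subgroup) auto
    then have "\<not> solvable ((alt_group n)\<lparr>carrier := generate (alt_group n) {commutator (alt_group n) g x1, commutator (alt_group n) g x2}\<rparr>)"
      using H by blast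
    then show ?thesis using x1 x2 by (intro exI[of _ "[x1, x2]"]) auto
  qed
  have lower: "2 \<le> m" if "?P m" for m
  proof (rule ccontr)
    assume "\<not> 2 \<le> m"
    then have m: "m = 0 \<or> m = 1" by auto
    from that obtain xs where xs: "length xs = m" "set xs \<subseteq> carrier (alt_group n)"
      and ns: "\<not> solvable ((alt_group n)\<lparr>carrier := generate (alt_group n) ((\<lambda>x. commutator (alt_group n) g x) ` set xs)\<rparr>)"
      by blast
    show False
    proof (cases "m = 0")
      case True
      then have "xs = []" using xs by simp
      then have "generate (alt_group n) ((\<lambda>x. commutator (alt_group n) g x) ` set xs) = {\<one>\<^bsub>alt_group n\<^esub>}"
        by (simp add: G.generate_empty)
      moreover have "solvable ((alt_group n)\<lparr>carrier := {\<one>\<^bsub>alt_group n\<^esub>}\<rparr>)"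
        by (rule abelian_solvable[OF G.is_group G.triv_subgroup]) simp
      ultimately show False using ns by simp
    next
      case False
      then have "m = 1" using m by simp
      then obtain x where "xs = [x]" using xs by (cases xs) auto
      then have xc: "x \<in> carrier (alt_group n)" and img: "(\<lambda>x. commutator (alt_group n) g x) ` set xs = {commutator (alt_group n) g x}"
        using xs by auto
      have "solvable ((alt_group n)\<lparr>carrier := generate (alt_group n) {commutator (alt_group n) g x}\<rparr>)"
        using commc[OF xc]
        by (intro abelian_solvable[OF G.is_group G.generate_is_subgroup] generate_single_comm[OF G.is_group]) auto
      then show False using ns img by simp
    qed
  qed
  show ?thesis unfolding kappa_elem_def
  proof (rule Least_equality[where x=2])
    show "?P 2" by (rule P2)
    show "\<And>y. ?P y \<Longrightarrow> 2 \<le> y" by (rule lower)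
  qed
qed

theorem proposition3p1:
  fixes n :: nat
  assumes "n \<ge> 5"
  shows "radical_degree (alt_group n) = 2"
proof -
  have c: "cyc3 1 2 3 \<in> carrier (alt_group n)" using assms by (intro cyc3_carrier) auto
  have cid: "cyc3 1 2 3 \<noteq> id" by (auto simp: fun_eq_iff cyc3_def intro!: exI[of _ 1])
  have "kappa_elem (alt_group n) ` (carrier (alt_group n) - solvable_radical (alt_group n)) = {2}"
  proof
    show "kappa_elem (alt_group n) ` (carrier (alt_group n) - solvable_radical (alt_group n)) \<subseteq> {2}"
      using kappa_alt[OF assms] radical_alt[OF assms] by auto
    show "{2} \<subseteq> kappa_elem (alt_group n) ` (carrier (alt_group n) - solvable_radical (alt_group n))"
      using kappa_alt[OF assms c cid] radical_alt[OF assms] c cid by (auto intro!: image_eqI[of _ _ "cyc3 1 2 3"])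
  qed
  then show ?thesis unfolding radical_degree_def by simp
qed

end
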